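(* Let $0<\kappa<1$, $0<h<\frac12$, $h_n=h2^{-n-1}$, and $a,b,c,C\ge0$. Let $\nu_n,\zeta_n,\eta_n,\epsilon_n$ ($n\ge0$) be non-negative sequences with $\nu_n\le C\kappa^{-2b}h_n^{-2a}\zeta_n^c(\zeta_n+\eta_n)\epsilon_n$ for $n\ge0$, and, for $n\ge1$, $\zeta_n\le\zeta_{n-1}+\nu_{n-1}$, $\eta_n\le\eta_{n-1}+\nu_{n-1}$, $\epsilon_n\le\nu_{n-1}\epsilon_{n-1}$, with $\zeta_0=\zeta\ge1$, $\eta_0=0$, $\epsilon_0=\epsilon$. Then there is $C'=C'(C,a,b,c)>0$ such that if for some $\varsigma\le1$ $$\epsilon<\frac{\varsigma}{C'}\kappa^{2b+1}h^{2a+1}\zeta^{-c-2},$$ then for all $n\ge0$: $\epsilon_n\le(\kappa h\zeta^{-1})^{2^n-1}\epsilon$ and $\eta_n<\varsigma\zeta_n^{-1}$. *)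

theory Defs
  imports Complex_Main
begin

end

theory Submission
  imports Defs
begin

lemma core:
  fixes A B q \<epsilon> \<zeta> :: real and \<nu> \<zeta>s \<eta> \<epsilon>s :: "nat \<Rightarrow> real"
  assumes A: "A \<ge> 0" and B: "B \<ge> 1" and q: "0 < q" "q \<le> 1/2" and e: "\<epsilon> \<ge> 0" and z: "\<zeta> \<ge> 1"
    and key: "A*\<epsilon>*B \<le> q"
    and nn: "\<forall>n. 0 \<le> \<nu> n \<and> 0 \<le> \<zeta>s n \<and> 0 \<le> \<eta> n \<and> 0 \<le> \<epsilon>s n"
    and nu: "\<forall>n. \<zeta>s n \<le> 2*\<zeta> \<longrightarrow> \<zeta>s n + \<eta> n \<le> 3*\<zeta> \<longrightarrow> \<nu> n \<le> A*B^n*\<epsilon>s n"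
    and rec: "\<forall>n. \<zeta>s (Suc n) \<le> \<zeta>s n + \<nu> n \<and> \<eta> (Suc n) \<le> \<eta> n + \<nu> n \<and> \<epsilon>s (Suc n) \<le> \<nu> n * \<epsilon>s n"
    and init: "\<zeta>s 0 = \<zeta>" "\<eta> 0 = 0" "\<epsilon>s 0 = \<epsilon>"
  shows "\<epsilon>s n \<le> q^(2^n-1)*\<epsilon>/B^n \<and> \<eta> n \<le> 2*A*\<epsilon> - 2*A*\<epsilon>/2^n \<and> \<zeta>s n \<le> \<zeta> + 2*A*\<epsilon> - 2*A*\<epsilon>/2^n"
proof (induction n)
  case 0
  then show ?case using init by simp
next
  case (Suc n)
  define p where "p = q^(2^n-1)"
  have e1: "\<epsilon>s n \<le> p*\<epsilon>/B^n" and e2: "\<eta> n \<le> 2*A*\<epsilon> - 2*A*\<epsilon>/2^n"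
    and e3: "\<zeta>s n \<le> \<zeta> + 2*A*\<epsilon> - 2*A*\<epsilon>/2^n" using Suc p_def by auto
  have Bp: "B^n > 0" using B by simp
  have Ae: "A*\<epsilon> \<ge> 0" using A e by simp
  have AeB: "A*\<epsilon> \<le> q/B" using key B by (simp add: pos_le_divide_eq)
  have "A*\<epsilon> \<le> A*\<epsilon>*B" using Ae B by (simp add: mult_le_cancel_left1)
  hence small: "2*A*\<epsilon> \<le> 1" using key q by linarith
  have pos2: "2*A*\<epsilon>/2^n \<ge> 0" using Ae by simp
  have z1: "\<zeta>s n \<le> 2*\<zeta>" using e3 small pos2 z by linarith
  have z2: "\<zeta>s n + \<eta> n \<le> 3*\<zeta>" using e3 e2 small pos2 z by linarith
  have nu1: "\<nu> n \<le> A*B^n*\<epsilon>s n" using nu z1 z2 by blast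
  have "A*B^n*\<epsilon>s n \<le> A*B^n*(p*\<epsilon>/B^n)"
    using e1 A Bp by (intro mult_left_mono) auto
  also have "\<dots> = A*\<epsilon>*p" proof - have "B \<noteq> 0" using B by simp thus ?thesis by (simp add: field_simps) qed
  finally have nu2: "\<nu> n \<le> A*\<epsilon>*p" using nu1 by linarith
  have p0: "p \<ge> 0" using q p_def by simp
  have "p \<le> (1/2)^(2^n-1)" unfolding p_def using q by (intro power_mono) auto
  also have "\<dots> \<le> (1/2)^n"
  proof (rule power_decreasing)
    have "n < 2^n" by (rule less_exp)
    thus "n \<le> 2^n - 1" by linarith
  qed auto
  finally have qpow: "p \<le> (1/2)^n" .
  have "A*\<epsilon>*p \<le> A*\<epsilon>*(1/2)^n" using qpow Ae by (rule mult_left_mono)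
  hence nu3: "\<nu> n \<le> A*\<epsilon>/2^n" using nu2 by (simp add: power_one_over)
  have h2: "2*A*\<epsilon>/2^(Suc n) = A*\<epsilon>/2^n" by simp
  have r: "\<zeta>s (Suc n) \<le> \<zeta>s n + \<nu> n \<and> \<eta> (Suc n) \<le> \<eta> n + \<nu> n \<and> \<epsilon>s (Suc n) \<le> \<nu> n * \<epsilon>s n"
    using rec by blast
  have eta: "\<eta> (Suc n) \<le> 2*A*\<epsilon> - 2*A*\<epsilon>/2^(Suc n)"
    using r e2 nu3 h2 by linarith
  have zeta: "\<zeta>s (Suc n) \<le> \<zeta> + 2*A*\<epsilon> - 2*A*\<epsilon>/2^(Suc n)"
    using r e3 nu3 h2 by linarith
  have "\<epsilon>s (Suc n) \<le> \<nu> n * \<epsilon>s n" using r by blast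
  also have "\<dots> \<le> (A*\<epsilon>*p) * (p*\<epsilon>/B^n)"
    using nu2 e1 nn Ae p0 by (intro mult_mono) auto
  also have "\<dots> = (A*\<epsilon>) * (p*p*\<epsilon>/B^n)" by simp
  also have "\<dots> \<le> (q/B) * (p*p*\<epsilon>/B^n)"
    using AeB p0 e Bp by (intro mult_right_mono) auto
  also have "\<dots> = q^(2^(Suc n)-1)*\<epsilon>/B^(Suc n)"
  proof -
    obtain m where m: "(2::nat)^n = Suc m" using one_le_power[of "2::nat" n]
      by (metis Suc_le_D numeral_le_iff one_le_numeral semiring_norm(69) nat_power_eq_Suc_0_iff not_less_eq_eq Suc_pred zero_less_power zero_less_numeral)
    have e1: "(2::nat)^(Suc n) - 1 = Suc (m+m)" using m by simp
    have e2: "p = q^m" unfolding p_def using m by simp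
    have "q^(2^(Suc n)-1) = q*p*p" unfolding e1 e2 by (simp add: power_add)
    thus ?thesis by simp
  qed
  finally show ?case using eta zeta by simp
qed


theorem lemma8p6:
  fixes a b c C :: real
  assumes "a \<ge> 0" "b \<ge> 0" "c \<ge> 0" "C \<ge> 0"
  shows "\<exists>C'>0. \<forall>(\<kappa>::real) (h::real) (\<nu>::nat \<Rightarrow> real) (\<zeta>s::nat \<Rightarrow> real)
           (\<eta>::nat \<Rightarrow> real) (\<epsilon>s::nat \<Rightarrow> real) (\<zeta>::real) (\<epsilon>::real) (\<sigma>::real).
     0 < \<kappa> \<and> \<kappa> < 1 \<and> 0 < h \<and> h < 1/2 \<and>
     (\<forall>n. 0 \<le> \<nu> n \<and> 0 \<le> \<zeta>s n \<and> 0 \<le> \<eta> n \<and> 0 \<le> \<epsilon>s n) \<and>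
     (\<forall>n. \<nu> n \<le> C * \<kappa> powr (-2*b) * (h * 2 powr (-(real n) - 1)) powr (-2*a)
                  * (if c = 0 then 1 else \<zeta>s n powr c) * (\<zeta>s n + \<eta> n) * \<epsilon>s n) \<and>
     (\<forall>n\<ge>1. \<zeta>s n \<le> \<zeta>s (n-1) + \<nu> (n-1) \<and> \<eta> n \<le> \<eta> (n-1) + \<nu> (n-1)
              \<and> \<epsilon>s n \<le> \<nu> (n-1) * \<epsilon>s (n-1)) \<and>
     \<zeta>s 0 = \<zeta> \<and> \<zeta> \<ge> 1 \<and> \<eta> 0 = 0 \<and> \<epsilon>s 0 = \<epsilon> \<and>
     \<sigma> \<le> 1 \<and>
     \<epsilon> < \<sigma> / C' * \<kappa> powr (2*b+1) * h powr (2*a+1) * \<zeta> powr (-c-2)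
     \<longrightarrow> (\<forall>n. \<epsilon>s n \<le> (\<kappa> * h / \<zeta>) ^ (2^n - 1) * \<epsilon> \<and>
              (\<zeta>s n > 0 \<longrightarrow> \<eta> n < \<sigma> / \<zeta>s n))"
proof -
  note abc = assms
  define K where "K = 12*C*4 powr a*4 powr a*2 powr c"
  have K0: "K \<ge> 0" unfolding K_def using abc by simp
  show ?thesis
    apply (rule exI[of _ "K+1"])
    apply (rule conjI)
    subgoal using K0 by simp
    apply (intro allI impI)
    apply (elim conjE)
    subgoal premises prems for \<kappa> h \<nu> \<zeta>s \<eta> \<epsilon>s \<zeta> \<epsilon> \<sigma> n
    proof -
      have kp: "0 < \<kappa>" "\<kappa> < 1" "0 < h" "h < 1/2" using prems by auto
      have nn: "\<forall>n. 0 \<le> \<nu> n \<and> 0 \<le> \<zeta>s n \<and> 0 \<le> \<eta> n \<and> 0 \<le> \<epsilon>s n" using prems by blast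
      have nub: "\<forall>n. \<nu> n \<le> C * \<kappa> powr (-2*b) * (h * 2 powr (-(real n) - 1)) powr (-2*a)
                  * (if c = 0 then 1 else \<zeta>s n powr c) * (\<zeta>s n + \<eta> n) * \<epsilon>s n" using prems by blast
      have rec1: "\<forall>n\<ge>1. \<zeta>s n \<le> \<zeta>s (n-1) + \<nu> (n-1) \<and> \<eta> n \<le> \<eta> (n-1) + \<nu> (n-1)
              \<and> \<epsilon>s n \<le> \<nu> (n-1) * \<epsilon>s (n-1)" using prems by blast
      have init: "\<zeta>s 0 = \<zeta>" "\<eta> 0 = 0" "\<epsilon>s 0 = \<epsilon>" using prems by auto
      have z: "\<zeta> \<ge> 1" and sle: "\<sigma> \<le> 1" using prems by auto
      define Y where "Y = \<kappa> powr (2*b+1) * h powr (2*a+1) * \<zeta> powr (-c-2)"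
      have eb: "\<epsilon> < \<sigma> / (K+1) * Y" using prems unfolding Y_def by (simp add: mult.assoc)
      have Y0: "Y \<ge> 0" unfolding Y_def by simp
      have e0: "\<epsilon> \<ge> 0" using nn init by metis
      have sp: "\<sigma> > 0"
      proof (rule ccontr)
        assume "\<not> \<sigma> > 0"
        hence "\<sigma> / (K+1) \<le> 0" using K0 by (simp add: divide_nonpos_pos)
        hence "\<sigma> / (K+1) * Y \<le> 0" using Y0 by (metis mult_nonpos_nonneg)
        thus False using eb e0 by linarith
      qed
      define q where "q = \<kappa>*h/\<zeta>"
      define B where "B = 4 powr a"
      define X where "X = \<kappa> powr(-2*b)*h powr(-2*a)*\<zeta> powr c*\<zeta>"
      define A where "A = C*\<kappa> powr(-2*b)*h powr(-2*a)*4 powr a*(2*\<zeta>) powr c*(3*\<zeta>)"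
      have zp: "\<zeta> > 0" using z by simp
      have XY: "X*Y = q"
      proof -
        have k1: "\<kappa> powr(-2*b) * \<kappa> powr (2*b+1) = \<kappa>" using kp by (simp add: powr_add[symmetric])
        have h1: "h powr(-2*a) * h powr (2*a+1) = h" using kp by (simp add: powr_add[symmetric])
        have "\<zeta> powr c * \<zeta> powr (-c-2) = \<zeta> powr (-2)" by (simp add: powr_add[symmetric])
        also have "\<dots> = 1/\<zeta>^2" using zp by (simp add: powr_minus divide_inverse)
        finally have z1: "\<zeta> powr c * \<zeta> powr (-c-2) = 1/\<zeta>^2" .
        have "X*Y = (\<kappa> powr(-2*b) * \<kappa> powr (2*b+1)) * (h powr(-2*a) * h powr (2*a+1))
                  * (\<zeta> powr c * \<zeta> powr (-c-2)) * \<zeta>" unfolding X_def Y_def by (simp add: ac_simps)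
        also have "\<dots> = q" unfolding k1 h1 z1 q_def using zp by (simp add: power2_eq_square)
        finally show ?thesis .
      qed
      have X0: "X \<ge> 0" unfolding X_def using zp by simp
      have AB: "A*B = (K/4)*X"
        unfolding A_def B_def K_def X_def using zp by (simp add: powr_mult algebra_simps)
      have A0: "A \<ge> 0" unfolding A_def using abc zp by simp
      have B1: "B \<ge> 1" unfolding B_def using abc by (simp add: ge_one_powr_ge_zero)
      have q0: "q > 0" unfolding q_def using kp zp by simp
      have kh0: "\<kappa>*h > 0" using kp by simp
      have qh: "q \<le> \<kappa>*h" unfolding q_def using kh0 z
        by (simp add: divide_le_eq mult_le_cancel_left1)
      have q2: "q \<le> 1/2"
      proof -
        have "\<kappa>*h \<le> 1*h" using kp by (intro mult_right_mono) auto
        thus ?thesis using qh kp by linarith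
      qed
      have key4: "A*\<epsilon>*B \<le> \<sigma>*q/4"
      proof -
        have "A*\<epsilon>*B = (K/4)*X*\<epsilon>" using AB by (simp add: ac_simps)
        also have "\<dots> \<le> (K/4)*X*(\<sigma>/(K+1)*Y)" using K0 X0 eb by (intro mult_left_mono) auto
        also have "\<dots> = (K/(K+1))*(\<sigma>*q/4)" using XY by (simp add: field_simps)
        also have "\<dots> \<le> 1*(\<sigma>*q/4)" using K0 sp q0 by (intro mult_right_mono) auto
        finally show ?thesis by simp
      qed
      have "\<sigma>*q \<le> 1*q" using sle q0 by (intro mult_right_mono) auto
      hence key: "A*\<epsilon>*B \<le> q" using key4 q0 by linarith
      have nu: "\<forall>n. \<zeta>s n \<le> 2*\<zeta> \<longrightarrow> \<zeta>s n + \<eta> n \<le> 3*\<zeta> \<longrightarrow> \<nu> n \<le> A*B^n*\<epsilon>s n"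
      proof (intro allI impI)
        fix n
        assume z1: "\<zeta>s n \<le> 2*\<zeta>" and z2: "\<zeta>s n + \<eta> n \<le> 3*\<zeta>"
        have hh: "(h * 2 powr (-(real n) - 1)) powr (-2*a) = h powr(-2*a)*4 powr a*B^n"
        proof -
          have f4: "4 powr t = 2 powr (2*t)" for t :: real
            by (simp add: powr_powr[symmetric])
          have "(h * 2 powr (-(real n) - 1)) powr (-2*a) = h powr (-2*a) * 2 powr ((-(real n) - 1)*(-2*a))"
            by (simp add: powr_mult powr_powr)
          also have "\<dots> = h powr(-2*a)*4 powr a*4 powr (real n * a)"
            by (simp add: f4 powr_add[symmetric] algebra_simps)
          finally show ?thesis unfolding B_def by (simp add: powr_power)
        qed
        have F: "(if c = 0 then 1 else \<zeta>s n powr c) \<le> (2*\<zeta>) powr c"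
          using z1 nn abc zp by (auto intro: powr_mono2)
        have "\<nu> n \<le> C * \<kappa> powr (-2*b) * (h * 2 powr (-(real n) - 1)) powr (-2*a)
                  * (if c = 0 then 1 else \<zeta>s n powr c) * (\<zeta>s n + \<eta> n) * \<epsilon>s n" using nub by blast
        also have "\<dots> \<le> C * \<kappa> powr (-2*b) * (h * 2 powr (-(real n) - 1)) powr (-2*a)
                  * ((2*\<zeta>) powr c) * (3*\<zeta>) * \<epsilon>s n"
          using F z2 nn abc by (intro mult_right_mono mult_mono mult_left_mono) auto
        also have "\<dots> = A*B^n*\<epsilon>s n" unfolding hh A_def by (simp add: ac_simps)
        finally show "\<nu> n \<le> A*B^n*\<epsilon>s n" .
      qed
      have rec: "\<forall>n. \<zeta>s (Suc n) \<le> \<zeta>s n + \<nu> n \<and> \<eta> (Suc n) \<le> \<eta> n + \<nu> n \<and> \<epsilon>s (Suc n) \<le> \<nu> n * \<epsilon>s n"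
      proof
        fix n show "\<zeta>s (Suc n) \<le> \<zeta>s n + \<nu> n \<and> \<eta> (Suc n) \<le> \<eta> n + \<nu> n \<and> \<epsilon>s (Suc n) \<le> \<nu> n * \<epsilon>s n"
          using rec1[rule_format, of "Suc n"] by simp
      qed
      have co: "\<epsilon>s n \<le> q^(2^n-1)*\<epsilon>/B^n \<and> \<eta> n \<le> 2*A*\<epsilon> - 2*A*\<epsilon>/2^n \<and> \<zeta>s n \<le> \<zeta> + 2*A*\<epsilon> - 2*A*\<epsilon>/2^n"
        by (rule core[OF A0 B1 q0 q2 e0 z key nn nu rec init])
      have Bn: "B^n \<ge> 1" using B1 by simp
      have x0: "q^(2^n-1)*\<epsilon> \<ge> 0" using q0 e0 by simp
      have "q^(2^n-1)*\<epsilon>/B^n \<le> q^(2^n-1)*\<epsilon>/1" using Bn x0 by (intro divide_left_mono) auto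
      hence E: "\<epsilon>s n \<le> (\<kappa> * h / \<zeta>) ^ (2^n - 1) * \<epsilon>" using co unfolding q_def by simp
      have Ae: "A*\<epsilon> \<ge> 0" using A0 e0 by simp
      have "A*\<epsilon> \<le> A*\<epsilon>*B" using Ae B1 by (simp add: mult_le_cancel_left1)
      hence s2: "2*A*\<epsilon> \<le> \<sigma>*q/2" using key4 by linarith
      have pos2: "2*A*\<epsilon>/2^n \<ge> 0" using Ae by simp
      have "\<sigma>*q \<le> 1*q" using sle q0 by (intro mult_right_mono) auto
      hence sq: "\<sigma>*q/2 \<le> \<zeta>" using q2 z by linarith
      have et: "\<eta> n \<le> \<sigma>*q/2" using co s2 pos2 by linarith
      have zt: "\<zeta>s n \<le> 2*\<zeta>" using co s2 pos2 sq by linarith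
      have "\<eta> n * \<zeta>s n \<le> (\<sigma>*q/2) * (2*\<zeta>)" using et zt nn sp q0 by (intro mult_mono) auto
      also have "\<dots> = \<sigma>*(\<kappa>*h)" unfolding q_def using zp by simp
      also have "\<dots> < \<sigma>*1"
      proof -
        have "\<kappa>*h \<le> 1*h" using kp by (intro mult_right_mono) auto
        hence "\<kappa>*h < 1" using kp by linarith
        thus ?thesis using sp by simp
      qed
      finally have ez: "\<eta> n * \<zeta>s n < \<sigma>" by simp
      show ?thesis using E ez by (auto simp: less_divide_eq)
    qed
    done
qed

end
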